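(* Let $(\mathfrak{a},\alpha,\beta)$ and $(V,\alpha_{V_0},\beta_{V_1})$ be multiplicative Hom-Lie antialgebras and let $\rho=(\rho_0,\rho_1)$ be an action of $(\mathfrak{a},\alpha,\beta)$ on $(V,\alpha_{V_0},\beta_{V_1})$. Then the $\mathbb{Z}_2$-graded space $\mathfrak{a}\oplus V$ with even part $\mathfrak{a}_0\oplus V_0$ and odd part $\mathfrak{a}_1\oplus V_1$, with maps $(\alpha+\alpha_{V_0})(x,u)=(\alpha(x),\alpha_{V_0}(u))$, $(\beta+\beta_{V_1})(y,w)=(\beta(y),\beta_{V_1}(w))$ and products $(x_1,u_1)\cdot(x_2,u_2)=(x_1\cdot x_2,\ \rho_0(x_1)(u_2)+\rho_0(x_2)(u_1)+u_1\cdot u_2)$, $(x_1,u_1)\cdot(y_1,w_1)=(x_1\cdot y_1,\ \rho_0(x_1)(w_1)+\rho_1(y_1)(u_1)+u_1\cdot w_1)$, $[(y_1,w_1),(y_2,w_2)]=([y_1,y_2],\ \rho_1(y_1)(w_2)-\rho_1(y_2)(w_1)+[w_1,w_2])$ (for $x_i\in\mathfrak{a}_0$, $y_i\in\mathfrak{a}_1$, $u_i\in V_0$, $w_i\in V_1$), is a multiplicative Hom-Lie antialgebra (the semidirect product $\mathfrak{a}\ltimes V$).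
   Context: A Hom-Lie antialgebra $(\mathfrak{a},\alpha,\beta)$ is a supercommutative $\mathbb{Z}_2$-graded algebra $\mathfrak{a}=\mathfrak{a}_0\oplus\mathfrak{a}_1$ (even·even commutative, even·odd = odd·even, the product of two odd elements, written $[\cdot,\cdot]$, is skew-symmetric with values in $\mathfrak{a}_0$) with linear maps $\alpha:\mathfrak{a}_0\to\mathfrak{a}_0$, $\beta:\mathfrak{a}_1\to\mathfrak{a}_1$ such that for all $x_i\in\mathfrak{a}_0$, $y_i\in\mathfrak{a}_1$: $\alpha(x_1)\cdot(x_2\cdot x_3)=(x_1\cdot x_2)\cdot\alpha(x_3)$; $\alpha(x_1)\cdot(x_2\cdot y_1)=\tfrac12(x_1\cdot x_2)\cdot\beta(y_1)$; $\alpha(x_1)\cdot[y_1,y_2]=[x_1\cdot y_1,\beta(y_2)]+[\beta(y_1),x_1\cdot y_2]$; $\beta(y_1)\cdot[y_2,y_3]+\beta(y_2)\cdot[y_3,y_1]+\beta(y_3)\cdot[y_1,y_2]=0$. It is multiplicative if $\alpha(x_1\cdot x_2)=\alpha(x_1)\cdot\alpha(x_2)$, $\beta(x_1\cdot y_1)=\alpha(x_1)\cdot\beta(y_1)$, $\alpha([y_1,y_2])=[\beta(y_1),\beta(y_2)]$. The same notation ($\cdot$, $[\cdot,\cdot]$, $\alpha_{V_0},\beta_{V_1}$) is used for $V$. A representation of $\mathfrak{a}$ on $V$ is a pair of linear maps $\rho_0:\mathfrak{a}_0\to\operatorname{End}(V)_0=\operatorname{Hom}(V_0,V_0)\oplus\operatorname{Hom}(V_1,V_1)$,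 $\rho_1:\mathfrak{a}_1\to\operatorname{End}(V)_1=\operatorname{Hom}(V_0,V_1)\oplus\operatorname{Hom}(V_1,V_0)$ such that for all $x,x_1,x_2\in\mathfrak{a}_0$, $y,y_1,y_2\in\mathfrak{a}_1$, $u\in V_0$, $w\in V_1$: (R1) $\alpha_{V_0}(\rho_0(x)u)=\rho_0(\alpha(x))\alpha_{V_0}(u)$; (R2) $\beta_{V_1}(\rho_0(x)w)=\rho_0(\alpha(x))\beta_{V_1}(w)$; (R3) $\beta_{V_1}(\rho_1(y)u)=\rho_1(\beta(y))\alpha_{V_0}(u)$; (R4) $\alpha_{V_0}(\rho_1(y)w)=\rho_1(\beta(y))\beta_{V_1}(w)$; (R5) $\rho_0(\alpha(x_1))\rho_0(x_2)u=\rho_0(x_1\cdot x_2)\alpha_{V_0}(u)$; (R6) $\rho_0(\alpha(x_1))\rho_0(x_2)w=\tfrac12\rho_0(x_1\cdot x_2)\beta_{V_1}(w)$; (R7) $\rho_0(\alpha(x))\rho_1(y)u=\tfrac12\rho_1(\beta(y))\rho_0(x)u$; (R8) $\rho_1(x\cdot y)\alpha_{V_0}(u)=\tfrac12\rho_1(\beta(y))\rho_0(x)u$; (R9) $\rho_0(\alpha(x))\rho_1(y)w=\rho_1(x\cdot y)\beta_{V_1}(w)+\rho_1(\beta(y))\rho_0(x)w$; (R10) $\rho_0([y_1,y_2])\alpha_{V_0}(u)=\rho_1(\beta(y_1))\rho_1(y_2)u-\rho_1(\beta(y_2))\rho_1(y_1)u$; (R11) $\rho_0([y_1,y_2])\beta_{V_1}(w)=-\rho_1(\beta(y_1))\rho_1(y_2)w+\rho_1(\beta(y_2))\rho_1(y_1)w$.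 An action of $\mathfrak{a}$ on $V$ is a representation $\rho$ such that for all $x\in\mathfrak{a}_0$, $y\in\mathfrak{a}_1$, $u,u_1,u_2\in V_0$, $w,w_1,w_2\in V_1$: (A1) $\rho_0(\alpha(x))(u_1\cdot u_2)=\rho_0(x)(u_1)\cdot\alpha_{V_0}(u_2)$; (A2) $\rho_0(\alpha(x))(u\cdot w)=\tfrac12\rho_0(x)(u)\cdot\beta_{V_1}(w)$; (A3) $\rho_1(y)(u_2)\cdot\alpha_{V_0}(u_1)=\tfrac12\rho_1(\beta(y))(u_1\cdot u_2)$; (A4) $\rho_0(x)(w)\cdot\alpha_{V_0}(u)=\tfrac12\rho_0(x)(u)\cdot\beta_{V_1}(w)$; (A5) $\rho_0(\alpha(x))([w_1,w_2])=[\rho_0(x)(w_1),\beta_{V_1}(w_2)]+[\beta_{V_1}(w_1),\rho_0(x)(w_2)]$; (A6) $\rho_1(\beta(y))(u\cdot w)=\alpha_{V_0}(u)\cdot\rho_1(y)(w)-[\rho_1(y)(u),\beta_{V_1}(w)]$; (A7) $\rho_1(\beta(y))([w_1,w_2])=\beta_{V_1}(w_1)\cdot\rho_1(y)(w_2)-\beta_{V_1}(w_2)\cdot\rho_1(y)(w_1)$. *)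

theory Defs
  imports Complex_Main "HOL-Library.Product_Plus"
begin

text \<open>A Z2-graded vector space a = a0 (+) a1 over a field 'k is given by two types
  'e (even part) and 'o (odd part) with scalar multiplications.
  A Hom-Lie antialgebra carries: the even-even product (mee), the even-odd product
  (meo; odd-even is the same by supercommutativity), the odd-odd bracket (br, values
  in the even part), and the twisting maps al (on a0) and be (on a1).\<close>

record ('k, 'e, 'o) hla =
  sce :: "'k \<Rightarrow> 'e \<Rightarrow> 'e"
  sco :: "'k \<Rightarrow> 'o \<Rightarrow> 'o"
  mee :: "'e \<Rightarrow> 'e \<Rightarrow> 'e"
  meo :: "'e \<Rightarrow> 'o \<Rightarrow> 'o"
  br  :: "'o \<Rightarrow> 'o \<Rightarrow> 'e"
  al  :: "'e \<Rightarrow> 'e"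
  be  :: "'o \<Rightarrow> 'o"

definition bilinear_map ::
  "('k::field \<Rightarrow> 'a::ab_group_add \<Rightarrow> 'a) \<Rightarrow> ('k \<Rightarrow> 'b::ab_group_add \<Rightarrow> 'b) \<Rightarrow>
   ('k \<Rightarrow> 'c::ab_group_add \<Rightarrow> 'c) \<Rightarrow> ('a \<Rightarrow> 'b \<Rightarrow> 'c) \<Rightarrow> bool" where
  "bilinear_map s1 s2 s3 f \<longleftrightarrow>
     (\<forall>x. Vector_Spaces.linear s2 s3 (f x)) \<and> (\<forall>y. Vector_Spaces.linear s1 s3 (\<lambda>x. f x y))"

definition hom_lie_antialgebra ::
  "('k::field, 'e::ab_group_add, 'o::ab_group_add) hla \<Rightarrow> bool" where
  "hom_lie_antialgebra A \<longleftrightarrow>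
     vector_space (sce A) \<and> vector_space (sco A) \<and>
     bilinear_map (sce A) (sce A) (sce A) (mee A) \<and>
     bilinear_map (sce A) (sco A) (sco A) (meo A) \<and>
     bilinear_map (sco A) (sco A) (sce A) (br A) \<and>
     Vector_Spaces.linear (sce A) (sce A) (al A) \<and>
     Vector_Spaces.linear (sco A) (sco A) (be A) \<and>
     (\<forall>x1 x2. mee A x1 x2 = mee A x2 x1) \<and>
     (\<forall>y1 y2. br A y1 y2 = - br A y2 y1) \<and>
     (\<forall>x1 x2 x3. mee A (al A x1) (mee A x2 x3) = mee A (mee A x1 x2) (al A x3)) \<and>
     (\<forall>x1 x2 y1. meo A (al A x1) (meo A x2 y1) =
                  sco A (1/2) (meo A (mee A x1 x2) (be A y1))) \<and>
     (\<forall>x1 y1 y2. mee A (al A x1) (br A y1 y2) =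
                  br A (meo A x1 y1) (be A y2) + br A (be A y1) (meo A x1 y2)) \<and>
     (\<forall>y1 y2 y3. meo A (br A y2 y3) (be A y1) + meo A (br A y3 y1) (be A y2)
                  + meo A (br A y1 y2) (be A y3) = 0)"

text \<open>Note: beta(y1).[y2,y3] is the odd-even product, equal to meo [y2,y3] (beta y1).\<close>

definition multiplicative :: "('k, 'e, 'o) hla \<Rightarrow> bool" where
  "multiplicative A \<longleftrightarrow>
     (\<forall>x1 x2. al A (mee A x1 x2) = mee A (al A x1) (al A x2)) \<and>
     (\<forall>x1 y1. be A (meo A x1 y1) = meo A (al A x1) (be A y1)) \<and>
     (\<forall>y1 y2. al A (br A y1 y2) = br A (be A y1) (be A y2))"

text \<open>rho0 = (r00, r01) : a0 -> Hom(V0,V0) (+) Hom(V1,V1);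
  rho1 = (r10, r11) : a1 -> Hom(V0,V1) (+) Hom(V1,V0).\<close>

record ('a0, 'a1, 'v0, 'v1) hla_rep =
  r00 :: "'a0 \<Rightarrow> 'v0 \<Rightarrow> 'v0"
  r01 :: "'a0 \<Rightarrow> 'v1 \<Rightarrow> 'v1"
  r10 :: "'a1 \<Rightarrow> 'v0 \<Rightarrow> 'v1"
  r11 :: "'a1 \<Rightarrow> 'v1 \<Rightarrow> 'v0"

definition representation ::
  "('k::field, 'a0::ab_group_add, 'a1::ab_group_add) hla \<Rightarrow>
   ('k, 'v0::ab_group_add, 'v1::ab_group_add) hla \<Rightarrow>
   ('a0, 'a1, 'v0, 'v1) hla_rep \<Rightarrow> bool" where
  "representation A V R \<longleftrightarrow>
     \<comment> \<open>rho0, rho1 are linear maps into the respective spaces of linear maps\<close>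
     bilinear_map (sce A) (sce V) (sce V) (r00 R) \<and>
     bilinear_map (sce A) (sco V) (sco V) (r01 R) \<and>
     bilinear_map (sco A) (sce V) (sco V) (r10 R) \<and>
     bilinear_map (sco A) (sco V) (sce V) (r11 R) \<and>
     \<comment> \<open>(R1)\<close>
     (\<forall>x u. al V (r00 R x u) = r00 R (al A x) (al V u)) \<and>
     \<comment> \<open>(R2)\<close>
     (\<forall>x w. be V (r01 R x w) = r01 R (al A x) (be V w)) \<and>
     \<comment> \<open>(R3)\<close>
     (\<forall>y u. be V (r10 R y u) = r10 R (be A y) (al V u)) \<and>
     \<comment> \<open>(R4)\<close>
     (\<forall>y w. al V (r11 R y w) = r11 R (be A y) (be V w)) \<and>
     \<comment> \<open>(R5)\<close>
     (\<forall>x1 x2 u. r00 R (al A x1) (r00 R x2 u) = r00 R (mee A x1 x2) (al V u)) \<and>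
     \<comment> \<open>(R6)\<close>
     (\<forall>x1 x2 w. r01 R (al A x1) (r01 R x2 w) = sco V (1/2) (r01 R (mee A x1 x2) (be V w))) \<and>
     \<comment> \<open>(R7)\<close>
     (\<forall>x y u. r01 R (al A x) (r10 R y u) = sco V (1/2) (r10 R (be A y) (r00 R x u))) \<and>
     \<comment> \<open>(R8)\<close>
     (\<forall>x y u. r10 R (meo A x y) (al V u) = sco V (1/2) (r10 R (be A y) (r00 R x u))) \<and>
     \<comment> \<open>(R9)\<close>
     (\<forall>x y w. r00 R (al A x) (r11 R y w) =
               r11 R (meo A x y) (be V w) + r11 R (be A y) (r01 R x w)) \<and>
     \<comment> \<open>(R10)\<close>
     (\<forall>y1 y2 u. r00 R (br A y1 y2) (al V u) =
               r11 R (be A y1) (r10 R y2 u) - r11 R (be A y2) (r10 R y1 u)) \<and>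
     \<comment> \<open>(R11)\<close>
     (\<forall>y1 y2 w. r01 R (br A y1 y2) (be V w) =
               - r10 R (be A y1) (r11 R y2 w) + r10 R (be A y2) (r11 R y1 w))"

definition action ::
  "('k::field, 'a0::ab_group_add, 'a1::ab_group_add) hla \<Rightarrow>
   ('k, 'v0::ab_group_add, 'v1::ab_group_add) hla \<Rightarrow>
   ('a0, 'a1, 'v0, 'v1) hla_rep \<Rightarrow> bool" where
  "action A V R \<longleftrightarrow>
     representation A V R \<and>
     \<comment> \<open>(A1)\<close>
     (\<forall>x u1 u2. r00 R (al A x) (mee V u1 u2) = mee V (r00 R x u1) (al V u2)) \<and>
     \<comment> \<open>(A2)\<close>
     (\<forall>x u w. r01 R (al A x) (meo V u w) = sco V (1/2) (meo V (r00 R x u) (be V w))) \<and>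
     \<comment> \<open>(A3): rho1(y)(u2) . alpha(u1) is the odd-even product\<close>
     (\<forall>y u1 u2. meo V (al V u1) (r10 R y u2) = sco V (1/2) (r10 R (be A y) (mee V u1 u2))) \<and>
     \<comment> \<open>(A4): rho0(x)(w) . alpha(u) is the odd-even product\<close>
     (\<forall>x u w. meo V (al V u) (r01 R x w) = sco V (1/2) (meo V (r00 R x u) (be V w))) \<and>
     \<comment> \<open>(A5)\<close>
     (\<forall>x w1 w2. r00 R (al A x) (br V w1 w2) =
                br V (r01 R x w1) (be V w2) + br V (be V w1) (r01 R x w2)) \<and>
     \<comment> \<open>(A6)\<close>
     (\<forall>y u w. r11 R (be A y) (meo V u w) =
                mee V (al V u) (r11 R y w) - br V (r10 R y u) (be V w)) \<and>
     \<comment> \<open>(A7): beta(w1) . rho1(y)(w2) is the odd-even product\<close>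
     (\<forall>y w1 w2. r10 R (be A y) (br V w1 w2) =
                meo V (r11 R y w2) (be V w1) - meo V (r11 R y w1) (be V w2))"

definition semidirect ::
  "('k, 'a0::ab_group_add, 'a1::ab_group_add) hla \<Rightarrow>
   ('k, 'v0::ab_group_add, 'v1::ab_group_add) hla \<Rightarrow>
   ('a0, 'a1, 'v0, 'v1) hla_rep \<Rightarrow> ('k, 'a0 \<times> 'v0, 'a1 \<times> 'v1) hla" where
  "semidirect A V R =
    \<lparr> sce = (\<lambda>c (x, u). (sce A c x, sce V c u)),
      sco = (\<lambda>c (y, w). (sco A c y, sco V c w)),
      mee = (\<lambda>(x1, u1) (x2, u2). (mee A x1 x2, r00 R x1 u2 + r00 R x2 u1 + mee V u1 u2)),
      meo = (\<lambda>(x1, u1) (y1, w1). (meo A x1 y1, r01 R x1 w1 + r10 R y1 u1 + meo V u1 w1)),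
      br = (\<lambda>(y1, w1) (y2, w2). (br A y1 y2, r11 R y1 w2 - r11 R y2 w1 + br V w1 w2)),
      al = (\<lambda>(x, u). (al A x, al V u)),
      be = (\<lambda>(y, w). (be A y, be V w)) \<rparr>"

end

theory Submission
  imports Defs
begin

lemma lin:
  assumes "Vector_Spaces.linear s1 s2 f"
  shows "f (a + b) = f a + f b" "f (s1 c a) = s2 c (f a)" "f (a - b) = f a - f b"
        "f (- a) = - f a" "f 0 = 0"
proof -
  interpret Vector_Spaces.linear s1 s2 f by fact
  show "f (a + b) = f a + f b" "f (s1 c a) = s2 c (f a)" "f (a - b) = f a - f b"
        "f (- a) = - f a" "f 0 = 0" by (simp_all add: add scale diff neg)
qed

lemma bil:
  assumes "bilinear_map s1 s2 s3 f"
  shows "f x (a + b) = f x a + f x b" "f x (s2 c a) = s3 c (f x a)" "f x (a - b) = f x a - f x b"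
        "f x (- a) = - f x a" "f x 0 = 0"
        "f (p + q) y = f p y + f q y" "f (s1 c p) y = s3 c (f p y)" "f (p - q) y = f p y - f q y"
        "f (- p) y = - f p y" "f 0 y = 0"
proof -
  have l1: "Vector_Spaces.linear s2 s3 (f x)" and l2: "Vector_Spaces.linear s1 s3 (\<lambda>x. f x y)"
    using assms unfolding bilinear_map_def by auto
  show "f x (a + b) = f x a + f x b" "f x (s2 c a) = s3 c (f x a)" "f x (a - b) = f x a - f x b"
        "f x (- a) = - f x a" "f x 0 = 0" using lin[OF l1] by auto
  show "f (p + q) y = f p y + f q y" "f (s1 c p) y = s3 c (f p y)" "f (p - q) y = f p y - f q y"
        "f (- p) y = - f p y" "f 0 y = 0" using lin[OF l2] by auto
qed

lemma vs:
  assumes "vector_space s"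
  shows "s a (x + y) = s a x + s a y" "s (a + b) x = s a x + s b x" "s a (s b x) = s (a * b) x" "s 1 x = x"
    "s a (x - y) = s a x - s a y" "s a (- x) = - s a x"
proof -
  interpret vector_space s by fact
  show "s a (x + y) = s a x + s a y" "s (a + b) x = s a x + s b x" "s a (s b x) = s (a * b) x" "s 1 x = x"
    "s a (x - y) = s a x - s a y" "s a (- x) = - s a x"
    by (simp_all add: scale_right_distrib scale_left_distrib scale_right_diff_distrib scale_minus_right)
qed

locale sd =
  fixes A :: "('k::field, 'a0::ab_group_add, 'a1::ab_group_add) hla"
    and V :: "('k, 'v0::ab_group_add, 'v1::ab_group_add) hla"
    and R :: "('a0, 'a1, 'v0, 'v1) hla_rep"
  assumes hA: "hom_lie_antialgebra A" and mA: "multiplicative A"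
    and hV: "hom_lie_antialgebra V" and mV: "multiplicative V"
    and act: "action A V R"
begin

abbreviation "S \<equiv> semidirect A V R"

lemma S_simps:
  "sce S c (x, u) = (sce A c x, sce V c u)"
  "sco S c (y, w) = (sco A c y, sco V c w)"
  "mee S (x1, u1) (x2, u2) = (mee A x1 x2, r00 R x1 u2 + r00 R x2 u1 + mee V u1 u2)"
  "meo S (x1, u1) (y1, w1) = (meo A x1 y1, r01 R x1 w1 + r10 R y1 u1 + meo V u1 w1)"
  "br S (y1, w1) (y2, w2) = (br A y1 y2, r11 R y1 w2 - r11 R y2 w1 + br V w1 w2)"
  "al S (x, u) = (al A x, al V u)"
  "be S (y, w) = (be A y, be V w)"
  by (simp_all add: semidirect_def)

lemmas hA' = hA[unfolded hom_lie_antialgebra_def]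
lemmas hV' = hV[unfolded hom_lie_antialgebra_def]
lemmas mA' = mA[unfolded multiplicative_def]
lemmas mV' = mV[unfolded multiplicative_def]
lemmas act' = act[unfolded action_def]
lemmas rep' = act'[THEN conjunct1, unfolded representation_def]
lemmas vsAe = hA'[THEN conjunct1, rule_format]
lemmas vsAo = hA'[THEN conjunct2, THEN conjunct1, rule_format]
lemmas bAee = hA'[THEN conjunct2, THEN conjunct2, THEN conjunct1, rule_format]
lemmas bAeo = hA'[THEN conjunct2, THEN conjunct2, THEN conjunct2, THEN conjunct1, rule_format]
lemmas bAoo = hA'[THEN conjunct2, THEN conjunct2, THEN conjunct2, THEN conjunct2, THEN conjunct1, rule_format]
lemmas lAal = hA'[THEN conjunct2, THEN conjunct2, THEN conjunct2, THEN conjunct2, THEN conjunct2, THEN conjunct1, rule_format]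
lemmas lAbe = hA'[THEN conjunct2, THEN conjunct2, THEN conjunct2, THEN conjunct2, THEN conjunct2, THEN conjunct2, THEN conjunct1, rule_format]
lemmas commA = hA'[THEN conjunct2, THEN conjunct2, THEN conjunct2, THEN conjunct2, THEN conjunct2, THEN conjunct2, THEN conjunct2, THEN conjunct1, rule_format]
lemmas skewA = hA'[THEN conjunct2, THEN conjunct2, THEN conjunct2, THEN conjunct2, THEN conjunct2, THEN conjunct2, THEN conjunct2, THEN conjunct2, THEN conjunct1, rule_format]
lemmas A1 = hA'[THEN conjunct2, THEN conjunct2, THEN conjunct2, THEN conjunct2, THEN conjunct2, THEN conjunct2, THEN conjunct2, THEN conjunct2, THEN conjunct2, THEN conjunct1, rule_format]
lemmas A2 = hA'[THEN conjunct2, THEN conjunct2, THEN conjunct2, THEN conjunct2, THEN conjunct2, THEN conjunct2, THEN conjunct2, THEN conjunct2, THEN conjunct2, THEN conjunct2, THEN conjunct1, rule_format]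
lemmas A3 = hA'[THEN conjunct2, THEN conjunct2, THEN conjunct2, THEN conjunct2, THEN conjunct2, THEN conjunct2, THEN conjunct2, THEN conjunct2, THEN conjunct2, THEN conjunct2, THEN conjunct2, THEN conjunct1, rule_format]
lemmas A4 = hA'[THEN conjunct2, THEN conjunct2, THEN conjunct2, THEN conjunct2, THEN conjunct2, THEN conjunct2, THEN conjunct2, THEN conjunct2, THEN conjunct2, THEN conjunct2, THEN conjunct2, THEN conjunct2, rule_format]
lemmas vsVe = hV'[THEN conjunct1, rule_format]
lemmas vsVo = hV'[THEN conjunct2, THEN conjunct1, rule_format]
lemmas bVee = hV'[THEN conjunct2, THEN conjunct2, THEN conjunct1, rule_format]
lemmas bVeo = hV'[THEN conjunct2, THEN conjunct2, THEN conjunct2, THEN conjunct1, rule_format]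
lemmas bVoo = hV'[THEN conjunct2, THEN conjunct2, THEN conjunct2, THEN conjunct2, THEN conjunct1, rule_format]
lemmas lVal = hV'[THEN conjunct2, THEN conjunct2, THEN conjunct2, THEN conjunct2, THEN conjunct2, THEN conjunct1, rule_format]
lemmas lVbe = hV'[THEN conjunct2, THEN conjunct2, THEN conjunct2, THEN conjunct2, THEN conjunct2, THEN conjunct2, THEN conjunct1, rule_format]
lemmas commV = hV'[THEN conjunct2, THEN conjunct2, THEN conjunct2, THEN conjunct2, THEN conjunct2, THEN conjunct2, THEN conjunct2, THEN conjunct1, rule_format]
lemmas skewV = hV'[THEN conjunct2, THEN conjunct2, THEN conjunct2, THEN conjunct2, THEN conjunct2, THEN conjunct2, THEN conjunct2, THEN conjunct2, THEN conjunct1, rule_format]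
lemmas V1 = hV'[THEN conjunct2, THEN conjunct2, THEN conjunct2, THEN conjunct2, THEN conjunct2, THEN conjunct2, THEN conjunct2, THEN conjunct2, THEN conjunct2, THEN conjunct1, rule_format]
lemmas V2 = hV'[THEN conjunct2, THEN conjunct2, THEN conjunct2, THEN conjunct2, THEN conjunct2, THEN conjunct2, THEN conjunct2, THEN conjunct2, THEN conjunct2, THEN conjunct2, THEN conjunct1, rule_format]
lemmas V3 = hV'[THEN conjunct2, THEN conjunct2, THEN conjunct2, THEN conjunct2, THEN conjunct2, THEN conjunct2, THEN conjunct2, THEN conjunct2, THEN conjunct2, THEN conjunct2, THEN conjunct2, THEN conjunct1, rule_format]
lemmas V4 = hV'[THEN conjunct2, THEN conjunct2, THEN conjunct2, THEN conjunct2, THEN conjunct2, THEN conjunct2, THEN conjunct2, THEN conjunct2, THEN conjunct2, THEN conjunct2, THEN conjunct2, THEN conjunct2, rule_format]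
lemmas mA1 = mA'[THEN conjunct1, rule_format]
lemmas mA2 = mA'[THEN conjunct2, THEN conjunct1, rule_format]
lemmas mA3 = mA'[THEN conjunct2, THEN conjunct2, rule_format]
lemmas mV1 = mV'[THEN conjunct1, rule_format]
lemmas mV2 = mV'[THEN conjunct2, THEN conjunct1, rule_format]
lemmas mV3 = mV'[THEN conjunct2, THEN conjunct2, rule_format]
lemmas b00 = rep'[THEN conjunct1, rule_format]
lemmas b01 = rep'[THEN conjunct2, THEN conjunct1, rule_format]
lemmas b10 = rep'[THEN conjunct2, THEN conjunct2, THEN conjunct1, rule_format]
lemmas b11 = rep'[THEN conjunct2, THEN conjunct2, THEN conjunct2, THEN conjunct1, rule_format]
lemmas R1 = rep'[THEN conjunct2, THEN conjunct2, THEN conjunct2, THEN conjunct2, THEN conjunct1, rule_format]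
lemmas R2 = rep'[THEN conjunct2, THEN conjunct2, THEN conjunct2, THEN conjunct2, THEN conjunct2, THEN conjunct1, rule_format]
lemmas R3 = rep'[THEN conjunct2, THEN conjunct2, THEN conjunct2, THEN conjunct2, THEN conjunct2, THEN conjunct2, THEN conjunct1, rule_format]
lemmas R4 = rep'[THEN conjunct2, THEN conjunct2, THEN conjunct2, THEN conjunct2, THEN conjunct2, THEN conjunct2, THEN conjunct2, THEN conjunct1, rule_format]
lemmas R5 = rep'[THEN conjunct2, THEN conjunct2, THEN conjunct2, THEN conjunct2, THEN conjunct2, THEN conjunct2, THEN conjunct2, THEN conjunct2, THEN conjunct1, rule_format]
lemmas R6 = rep'[THEN conjunct2, THEN conjunct2, THEN conjunct2, THEN conjunct2, THEN conjunct2, THEN conjunct2, THEN conjunct2, THEN conjunct2, THEN conjunct2, THEN conjunct1, rule_format]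
lemmas R7 = rep'[THEN conjunct2, THEN conjunct2, THEN conjunct2, THEN conjunct2, THEN conjunct2, THEN conjunct2, THEN conjunct2, THEN conjunct2, THEN conjunct2, THEN conjunct2, THEN conjunct1, rule_format]
lemmas R8 = rep'[THEN conjunct2, THEN conjunct2, THEN conjunct2, THEN conjunct2, THEN conjunct2, THEN conjunct2, THEN conjunct2, THEN conjunct2, THEN conjunct2, THEN conjunct2, THEN conjunct2, THEN conjunct1, rule_format]
lemmas R9 = rep'[THEN conjunct2, THEN conjunct2, THEN conjunct2, THEN conjunct2, THEN conjunct2, THEN conjunct2, THEN conjunct2, THEN conjunct2, THEN conjunct2, THEN conjunct2, THEN conjunct2, THEN conjunct2, THEN conjunct1, rule_format]
lemmas R10 = rep'[THEN conjunct2, THEN conjunct2, THEN conjunct2, THEN conjunct2, THEN conjunct2, THEN conjunct2, THEN conjunct2, THEN conjunct2, THEN conjunct2, THEN conjunct2, THEN conjunct2, THEN conjunct2, THEN conjunct2, THEN conjunct1, rule_format]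
lemmas R11 = rep'[THEN conjunct2, THEN conjunct2, THEN conjunct2, THEN conjunct2, THEN conjunct2, THEN conjunct2, THEN conjunct2, THEN conjunct2, THEN conjunct2, THEN conjunct2, THEN conjunct2, THEN conjunct2, THEN conjunct2, THEN conjunct2, rule_format]
lemmas C1 = act'[THEN conjunct2, THEN conjunct1, rule_format]
lemmas C2 = act'[THEN conjunct2, THEN conjunct2, THEN conjunct1, rule_format]
lemmas C3 = act'[THEN conjunct2, THEN conjunct2, THEN conjunct2, THEN conjunct1, rule_format]
lemmas C4 = act'[THEN conjunct2, THEN conjunct2, THEN conjunct2, THEN conjunct2, THEN conjunct1, rule_format]
lemmas C5 = act'[THEN conjunct2, THEN conjunct2, THEN conjunct2, THEN conjunct2, THEN conjunct2, THEN conjunct1, rule_format]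
lemmas C6 = act'[THEN conjunct2, THEN conjunct2, THEN conjunct2, THEN conjunct2, THEN conjunct2, THEN conjunct2, THEN conjunct1, rule_format]
lemmas C7 = act'[THEN conjunct2, THEN conjunct2, THEN conjunct2, THEN conjunct2, THEN conjunct2, THEN conjunct2, THEN conjunct2, rule_format]

lemmas L = bil[OF bAee] bil[OF bAeo] bil[OF bAoo] lin[OF lAal] lin[OF lAbe]
  bil[OF bVee] bil[OF bVeo] bil[OF bVoo] lin[OF lVal] lin[OF lVbe]
  bil[OF b00] bil[OF b01] bil[OF b10] bil[OF b11]

lemmas VSs = vs[OF vsAe] vs[OF vsAo] vs[OF vsVe] vs[OF vsVo]

lemma mult_S: "multiplicative S"
  unfolding multiplicative_def
  by (simp add: split_paired_all S_simps L mA1 mA2 mA3 mV1 mV2 mV3 R1 R2 R3 R4)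


lemma vs_S: "vector_space (sce S)" "vector_space (sco S)"
  unfolding vector_space_def by (simp_all add: split_paired_all S_simps VSs)

lemma bil_S: "bilinear_map (sce S) (sce S) (sce S) (mee S)"
  "bilinear_map (sce S) (sco S) (sco S) (meo S)"
  "bilinear_map (sco S) (sco S) (sce S) (br S)"
  "Vector_Spaces.linear (sce S) (sce S) (al S)"
  "Vector_Spaces.linear (sco S) (sco S) (be S)"
  unfolding bilinear_map_def Vector_Spaces.linear_iff
  by (simp_all add: vs_S split_paired_all S_simps L VSs algebra_simps)

lemma id1: "mee S (al S (x1,u1)) (mee S (x2,u2) (x3,u3)) = mee S (mee S (x1,u1) (x2,u2)) (al S (x3,u3))"
proof -
  have e1: "r00 R (al A x1) (r00 R x2 u3) = r00 R (mee A x1 x2) (al V u3)" by (rule R5)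
  have e2: "r00 R (al A x1) (r00 R x3 u2) = r00 R (al A x3) (r00 R x1 u2)" using R5 commA by metis
  have e3: "r00 R (al A x1) (mee V u2 u3) = mee V (r00 R x1 u2) (al V u3)" by (rule C1)
  have e4: "r00 R (mee A x2 x3) (al V u1) = r00 R (al A x3) (r00 R x2 u1)" using R5 commA by metis
  have e5: "mee V (al V u1) (r00 R x2 u3) = mee V (r00 R x2 u1) (al V u3)" by (metis C1 commV)
  have e6: "mee V (al V u1) (r00 R x3 u2) = r00 R (al A x3) (mee V u1 u2)" by (metis C1 commV)
  have e7: "mee V (al V u1) (mee V u2 u3) = mee V (mee V u1 u2) (al V u3)" by (rule V1)
  show ?thesis by (simp add: S_simps L A1 e1 e2 e3 e4 e5 e6 e7 algebra_simps)
qed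

lemma id2: "meo S (al S (x1,u1)) (meo S (x2,u2) (y,w)) = sco S (1/2) (meo S (mee S (x1,u1) (x2,u2)) (be S (y,w)))"
proof -
  note e = R6[of x1 x2 w] R7[of x1 y u2] C2[of x1 u2 w] R8[of x2 y u1] C4[of u1 x2 w] C3[of u1 y u2] V2[of u1 u2 w]
  show ?thesis by (simp add: S_simps L A2 e VSs algebra_simps)
qed

lemma id3: "mee S (al S (x,u)) (br S (y1,w1) (y2,w2)) = br S (meo S (x,u) (y1,w1)) (be S (y2,w2)) + br S (be S (y1,w1)) (meo S (x,u) (y2,w2))"
proof -
  have c1: "mee V (al V u) (r11 R y1 w2) = r11 R (be A y1) (meo V u w2) + br V (r10 R y1 u) (be V w2)"
    using C6[of y1 u w2] by simp
  have c2: "mee V (al V u) (r11 R y2 w1) = r11 R (be A y2) (meo V u w1) + br V (r10 R y2 u) (be V w1)"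
    using C6[of y2 u w1] by simp
  have sk: "br V (be V w1) (r10 R y2 u) = - br V (r10 R y2 u) (be V w1)" by (rule skewV)
  note e = R9[of x y1 w2] R9[of x y2 w1] C5[of x w1 w2] R10[of y1 y2 u] V3[of u w1 w2] c1 c2 sk
  show ?thesis by (simp add: S_simps L A3 e algebra_simps)
qed

lemma id4: "meo S (br S (y2,w2) (y3,w3)) (be S (y1,w1)) + meo S (br S (y3,w3) (y1,w1)) (be S (y2,w2))
  + meo S (br S (y1,w1) (y2,w2)) (be S (y3,w3)) = 0"
proof -
  have a4: "meo A (br A y2 y3) (be A y1) = - meo A (br A y3 y1) (be A y2) - meo A (br A y1 y2) (be A y3)"
    using A4[of y2 y3 y1] by (simp add: eq_neg_iff_add_eq_0 algebra_simps)
  have v4: "meo V (br V w2 w3) (be V w1) = - meo V (br V w3 w1) (be V w2) - meo V (br V w1 w2) (be V w3)"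
    using V4[of w2 w3 w1] by (simp add: eq_neg_iff_add_eq_0 algebra_simps)
  note e = R11[of y2 y3 w1] R11[of y3 y1 w2] R11[of y1 y2 w3] C7[of y1 w2 w3] C7[of y2 w3 w1] C7[of y3 w1 w2] a4 v4
  show ?thesis by (simp add: S_simps L e algebra_simps zero_prod_def)
qed

lemma hla_S: "hom_lie_antialgebra S"
  unfolding hom_lie_antialgebra_def
proof (intro conjI)
  show "\<forall>X1 X2. mee S X1 X2 = mee S X2 X1"
  proof (intro allI)
    fix X1 X2 :: "'a0 \<times> 'v0"
    show "mee S X1 X2 = mee S X2 X1"
      by (cases X1; cases X2) (simp add: S_simps commA commV add_ac)
  qed
  show "\<forall>Y1 Y2. br S Y1 Y2 = - br S Y2 Y1"
  proof (intro allI)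
    fix Y1 Y2 :: "'a1 \<times> 'v1"
    show "br S Y1 Y2 = - br S Y2 Y1"
      proof (cases Y1; cases Y2)
      fix a b c d assume "Y1 = (a, b)" "Y2 = (c, d)"
      then show ?thesis by (simp add: S_simps skewA[of a c] skewV[of b d])
    qed
  qed
qed (simp_all add: vs_S bil_S split_paired_all id1 id2 id3 id4)

end

theorem theorem3p4:
  fixes A :: "('k::field, 'a0::ab_group_add, 'a1::ab_group_add) hla"
    and V :: "('k, 'v0::ab_group_add, 'v1::ab_group_add) hla"
    and R :: "('a0, 'a1, 'v0, 'v1) hla_rep"
  assumes "(2::'k) \<noteq> 0"
    and "hom_lie_antialgebra A" and "multiplicative A"
    and "hom_lie_antialgebra V" and "multiplicative V"
    and "action A V R"
  shows "hom_lie_antialgebra (semidirect A V R) \<and> multiplicative (semidirect A V R)"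
proof -
  interpret sd A V R using assms(2-6) by unfold_locales
  show ?thesis using hla_S mult_S by simp
qed

end
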